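(* Assume $n>3t+2d$. In any execution of Algorithm 1, the mbrb-broadcast of an app-message by a correct process $p_i$ entails the sending of at most $2n^2$ implementation messages by correct processes.
   Context: System model. There are $n$ asynchronous processes $p_1,\dots,p_n$ with distinct known identities. Up to $t$ are Byzantine (arbitrary behavior); the rest are correct; $c$ is the number of correct processes. The network is fully connected, asynchronous, never corrupts/duplicates/creates messages; "broadcast $M$" sends $M$ to all $n$ processes (counting as $n$ sent imp-messages); a message adversary may suppress, per broadcast by a correct process, up to $d<c$ copies addressed to correct processes. Signatures are unforgeable and public keys are known. Algorithm 1 (code for $p_i$). Each process stores, for each triplet $(m,sn,j)$, a set of saved valid signatures of that triplet, at most one per signer. On $\mathrm{mbrb\_broadcast}(m,sn)$: $p_i$ saves its own signature of $(m,sn,i)$ and broadcasts $\mathrm{BUNDLE}(m,sn,i,S)$, $S$ the saved signatures for $(m,sn,i)$. On receiving $\mathrm{BUNDLE}(m,sn,j,sigs)$: if $p_i$ has not already mbrb-delivered some $(-,sn,j)$ and $sigs$ contains a valid signature of $(m,sn,j)$ by $p_j$, then: (1) save all new valid signatures of $(m,sn,j)$ in $sigs$; (2) if $p_i$ has not yet signed any $(-,sn,j)$, save its own signature of $(m,sn,j)$ and broadcast $\mathrm{BUNDLE}(m,sn,j,\text{all saved signatures for }(m,sn,j))$; (3) if strictly more than $\frac{n+t}{2}$ signatures for $(m,sn,j)$ are saved, broadcast $\mathrm{BUNDLE}(m,sn,j,\text{all saved signatures})$ and mbrb-deliver $(m,sn,j)$. *)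

theory Defs
  imports Main "HOL-Library.Multiset"
begin

datatype 'm bmsg = BUNDLE 'm nat nat "nat set"

fun bundle_tag :: "'m bmsg \<Rightarrow> nat \<times> nat" where
  "bundle_tag (BUNDLE m sn j S) = (sn, j)"

(* packet = (sender, destination, content) *)
type_synonym 'm packet = "nat \<times> nat \<times> 'm bmsg"

record 'm lstate =
  saved :: "'m \<times> nat \<times> nat \<Rightarrow> nat set"   (* saved valid signatures per triplet *)
  deliv :: "nat \<times> nat \<Rightarrow> 'm option"       (* mbrb-delivered (m,sn,j), indexed by (sn,j) *)

record 'm gstate =
  loc :: "nat \<Rightarrow> 'm lstate"
  net :: "'m packet multiset"
  sent :: "'m packet multiset"      (* log of every imp-message ever sent *)
  invoked :: "(nat \<times> nat) set"      (* (p,sn) pairs for which p invoked mbrb_broadcast *)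

definition procs :: "nat \<Rightarrow> nat set" where
  "procs n = {1..n}"

definition bcast :: "nat \<Rightarrow> nat \<Rightarrow> 'm bmsg \<Rightarrow> 'm packet multiset" where
  "bcast n p B = image_mset (\<lambda>q. (p, q, B)) (mset_set (procs n))"

definition has_signed :: "'m lstate \<Rightarrow> nat \<Rightarrow> nat \<Rightarrow> nat \<Rightarrow> bool" where
  "has_signed ls p sn j = (\<exists>m. p \<in> saved ls (m, sn, j))"

(* handler of Algorithm 1 at correct process p for a received BUNDLE;
   returns new local state and the list of bundles broadcast *)
definition recv_handler ::
  "nat \<Rightarrow> nat \<Rightarrow> nat \<Rightarrow> 'm bmsg \<Rightarrow> 'm lstate \<Rightarrow> 'm lstate \<times> 'm bmsg list" where
  "recv_handler n t p B ls = (case B of BUNDLE m sn j S \<Rightarrow>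
     if deliv ls (sn, j) \<noteq> None \<or> j \<notin> S \<inter> procs n then (ls, [])
     else
       (let sv1 = saved ls (m, sn, j) \<union> (S \<inter> procs n);
            sv2 = (if has_signed ls p sn j then sv1 else insert p sv1);
            out2 = (if has_signed ls p sn j then [] else [BUNDLE m sn j sv2]);
            ls2 = ls\<lparr>saved := (saved ls)((m, sn, j) := sv2)\<rparr>
        in if 2 * card sv2 > n + t
           then (ls2\<lparr>deliv := (deliv ls2)((sn, j) := Some m)\<rparr>, out2 @ [BUNDLE m sn j sv2])
           else (ls2, out2)))"

definition init_state :: "'m gstate" where
  "init_state = \<lparr>loc = (\<lambda>_. \<lparr>saved = (\<lambda>_. {}), deliv = (\<lambda>_. None)\<rparr>),
                 net = {#}, sent = {#}, invoked = {}\<rparr>"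

inductive step :: "nat \<Rightarrow> nat \<Rightarrow> nat set \<Rightarrow> 'm gstate \<Rightarrow> 'm gstate \<Rightarrow> bool"
  for n t :: nat and Byz :: "nat set" where
  (* correct p invokes mbrb_broadcast(m,sn); sequence numbers are not reused *)
  mbrb_broadcast:
  "\<lbrakk> p \<in> procs n - Byz; (p, sn) \<notin> invoked s;
     sv = insert p (saved (loc s p) (m, sn, p)) \<rbrakk> \<Longrightarrow>
   step n t Byz s
     (s\<lparr>loc := (loc s)(p := (loc s p)\<lparr>saved := (saved (loc s p))((m, sn, p) := sv)\<rparr>),
        net := net s + bcast n p (BUNDLE m sn p sv),
        sent := sent s + bcast n p (BUNDLE m sn p sv),
        invoked := insert (p, sn) (invoked s)\<rparr>)"
| receive:
  "\<lbrakk> p \<in> procs n - Byz; (q, p, B) \<in># net s;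
     recv_handler n t p B (loc s p) = (ls', outs);
     Out = sum_list (map (bcast n p) outs) \<rbrakk> \<Longrightarrow>
   step n t Byz s
     (s\<lparr>loc := (loc s)(p := ls'),
        net := (net s - {#(q, p, B)#}) + Out,
        sent := sent s + Out\<rparr>)"
  (* a Byzantine process sends an arbitrary message, but cannot forge signatures of
     correct processes: it may only include signatures that their signers produced *)
| byz_send:
  "\<lbrakk> p \<in> Byz; q \<in> procs n;
     \<forall>r \<in> S - Byz. r \<in> saved (loc s r) (m, sn, j) \<rbrakk> \<Longrightarrow>
   step n t Byz s
     (s\<lparr>net := net s + {#(p, q, BUNDLE m sn j S)#},
        sent := sent s + {#(p, q, BUNDLE m sn j S)#}\<rparr>)"

definition reachable :: "nat \<Rightarrow> nat \<Rightarrow> nat set \<Rightarrow> 'm gstate \<Rightarrow> bool" where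
  "reachable n t Byz s = (step n t Byz)\<^sup>*\<^sup>* init_state s"

end

theory Submission
  imports Defs
begin

definition cnt :: "nat \<Rightarrow> nat \<Rightarrow> nat \<Rightarrow> 'm packet multiset \<Rightarrow> nat" where
  "cnt p sn i M = size (filter_mset (\<lambda>(src, dst, B). src = p \<and> bundle_tag B = (sn, i)) M)"

definition fv :: "nat \<Rightarrow> nat \<Rightarrow> nat \<Rightarrow> 'm lstate \<Rightarrow> nat" where
  "fv p sn i ls = (if has_signed ls p sn i then 1 else 0) + (if deliv ls (sn,i) \<noteq> None then 1 else 0)"

definition le_ls :: "'m lstate \<Rightarrow> 'm lstate \<Rightarrow> bool" where
  "le_ls ls ls' = ((\<forall>k. saved ls k \<subseteq> saved ls' k) \<and> (\<forall>k. deliv ls k \<noteq> None \<longrightarrow> deliv ls' k \<noteq> None))"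

lemma fv_mono: "le_ls ls ls' \<Longrightarrow> fv p sn i ls \<le> fv p sn i ls'"
  unfolding fv_def le_ls_def has_signed_def by (auto split: if_splits; blast)

lemma card_procs[simp]: "card (procs n) = n" by (simp add: procs_def)
lemma fin_procs[simp]: "finite (procs n)" by (simp add: procs_def)

lemma cnt_plus[simp]: "cnt p sn i (M + N) = cnt p sn i M + cnt p sn i N"
  by (simp add: cnt_def)

lemma cnt_bcast: "cnt p sn i (bcast n q B) = (if q = p \<and> bundle_tag B = (sn,i) then n else 0)"
  unfolding cnt_def bcast_def by (simp add: filter_mset_image_mset comp_def)

lemma cnt_single: "cnt p sn i {#(q,r,B)#} = (if q = p \<and> bundle_tag B = (sn,i) then 1 else 0)"
  unfolding cnt_def by simp

lemma cnt_suml: "cnt p sn i (sum_list (map (bcast n q) outs)) =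
   (if q = p then n * length (filter (\<lambda>B. bundle_tag B = (sn,i)) outs) else 0)"
  by (induction outs) (auto simp: cnt_bcast, simp add: cnt_def)

lemma mem_bcast: "x \<in># bcast n p B \<longleftrightarrow> (\<exists>q\<in>procs n. x = (p,q,B))"
  unfolding bcast_def by auto

lemma mem_suml: "x \<in># sum_list (map (bcast n p) outs) \<longleftrightarrow> (\<exists>B\<in>set outs. \<exists>q\<in>procs n. x = (p,q,B))"
  by (induction outs) (auto simp: mem_bcast)

lemma recv_props:
  assumes "recv_handler n t p (BUNDLE m sn j S) ls = (ls', outs)"
  shows "le_ls ls ls'"
    and "\<forall>B'\<in>set outs. B' = BUNDLE m sn j (saved ls' (m,sn,j))"
    and "outs \<noteq> [] \<Longrightarrow> j \<in> S \<and> j \<in> saved ls' (m,sn,j)"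
    and "\<forall>k. saved ls' k \<noteq> saved ls k \<longrightarrow> k = (m,sn,j) \<and> j \<in> S"
    and "length outs + fv p sn j ls \<le> fv p sn j ls'"
  using assms
  by (auto simp: recv_handler_def Let_def le_ls_def fv_def has_signed_def split: if_splits)

definition Inv :: "nat \<Rightarrow> nat set \<Rightarrow> nat \<Rightarrow> nat \<Rightarrow> 'm gstate \<Rightarrow> bool" where
  "Inv n Byz sn i s =
   ((\<forall>j m sn'. j \<in> procs n - Byz \<and> j \<in> saved (loc s j) (m,sn',j) \<longrightarrow> (j,sn') \<in> invoked s) \<and>
    (\<forall>q p m sn' j S. (q,p,BUNDLE m sn' j S) \<in># net s \<and> j \<in> procs n - Byz \<and> j \<in> S
        \<longrightarrow> j \<in> saved (loc s j) (m,sn',j)) \<and>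
    (\<forall>x \<in># sent s. fst x \<in> Byz \<or> fst x \<in> procs n) \<and>
    (\<forall>p \<in> procs n - Byz. cnt p sn i (sent s) \<le> n * fv p sn i (loc s p)))"

lemma Inv_init: "Inv n Byz sn i init_state"
  by (simp add: Inv_def init_state_def cnt_def)

lemma step_mono: "step n t Byz s s' \<Longrightarrow> le_ls (loc s r) (loc s' r)"
proof (induction rule: step.induct)
  case (mbrb_broadcast p sn s sv m)
  then show ?case by (auto simp: le_ls_def)
next
  case (receive p q B s ls' outs Out)
  obtain m sn j S where B: "B = BUNDLE m sn j S" by (cases B)
  show ?case using recv_props(1)[of n t p m sn j S "loc s p" ls' outs] receive B
    by (auto simp: le_ls_def)
next
  case (byz_send p q S s m sn j)
  then show ?case by (auto simp: le_ls_def)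
qed

lemma le_saved: "le_ls a b \<Longrightarrow> x \<in> saved a k \<Longrightarrow> x \<in> saved b k"
  unfolding le_ls_def by blast

lemma Inv_step: "step n t Byz s s' \<Longrightarrow> Inv n Byz sn i s \<Longrightarrow> Inv n Byz sn i s'"
proof (induction rule: step.induct)
  case (mbrb_broadcast p sn0 s sv m)
  let ?s' = "s\<lparr>loc := (loc s)(p := (loc s p)\<lparr>saved := (saved (loc s p))((m, sn0, p) := sv)\<rparr>),
        net := net s + bcast n p (BUNDLE m sn0 p sv),
        sent := sent s + bcast n p (BUNDLE m sn0 p sv),
        invoked := insert (p, sn0) (invoked s)\<rparr>"
  have st: "step n t Byz s ?s'" using mbrb_broadcast.hyps by (rule step.mbrb_broadcast)
  note I = mbrb_broadcast.prems[unfolded Inv_def]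
  have mono: "\<And>r. le_ls (loc s r) (loc ?s' r)" using step_mono[OF st] .
  have A: "\<forall>j m' sn'. j \<in> procs n - Byz \<and> j \<in> saved (loc ?s' j) (m',sn',j) \<longrightarrow> (j,sn') \<in> invoked ?s'"
    using I by auto
  have B: "\<forall>q r m' sn' j S. (q,r,BUNDLE m' sn' j S) \<in># net ?s' \<and> j \<in> procs n - Byz \<and> j \<in> S
        \<longrightarrow> j \<in> saved (loc ?s' j) (m',sn',j)"
  proof (intro allI impI)
    fix q r m' sn' j S
    assume h: "(q,r,BUNDLE m' sn' j S) \<in># net ?s' \<and> j \<in> procs n - Byz \<and> j \<in> S"
    show "j \<in> saved (loc ?s' j) (m',sn',j)"
    proof (cases "(q,r,BUNDLE m' sn' j S) \<in># net s")
      case True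
      then show ?thesis using I h le_saved[OF mono[of j]] by blast
    next
      case False
      then have "(q,r,BUNDLE m' sn' j S) \<in># bcast n p (BUNDLE m sn0 p sv)" using h by auto
      then show ?thesis using h mbrb_broadcast.hyps by (auto simp: mem_bcast)
    qed
  qed
  have C: "\<forall>x \<in># sent ?s'. fst x \<in> Byz \<or> fst x \<in> procs n"
    using I mbrb_broadcast.hyps by (auto simp: mem_bcast)
  have D: "\<forall>r \<in> procs n - Byz. cnt r sn i (sent ?s') \<le> n * fv r sn i (loc ?s' r)"
  proof
    fix r assume r: "r \<in> procs n - Byz"
    have old: "cnt r sn i (sent s) \<le> n * fv r sn i (loc s r)" using I r by blast
    have fm: "fv r sn i (loc s r) \<le> fv r sn i (loc ?s' r)" using fv_mono[OF mono] .
    show "cnt r sn i (sent ?s') \<le> n * fv r sn i (loc ?s' r)"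
    proof (cases "p = r \<and> (sn0, p) = (sn, i)")
      case True
      then have eq: "p = r" "sn0 = sn" "i = p" by auto
      have "\<not> has_signed (loc s p) p sn i"
        using I mbrb_broadcast.hyps eq unfolding has_signed_def by blast
      moreover have "has_signed (loc ?s' p) p sn i"
        using mbrb_broadcast.hyps eq unfolding has_signed_def by auto
      moreover have "deliv (loc ?s' p) = deliv (loc s p)" by simp
      ultimately have "fv r sn i (loc ?s' r) = fv r sn i (loc s r) + 1"
        using eq unfolding fv_def by simp
      then show ?thesis using old eq by (simp add: cnt_bcast)
    next
      case False
      have m2: "n * fv r sn i (loc s r) \<le> n * fv r sn i (loc ?s' r)" by (rule mult_le_mono2[OF fm])
      have "cnt r sn i (sent ?s') = cnt r sn i (sent s)" using False by (auto simp: cnt_bcast)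
      then show ?thesis using old m2 by linarith
    qed
  qed
  show ?case using A B C D unfolding Inv_def by blast
next
  case (receive p q B s ls' outs Out)
  obtain m0 sn0 j0 S0 where Bd: "B = BUNDLE m0 sn0 j0 S0" by (cases B)
  let ?s' = "s\<lparr>loc := (loc s)(p := ls'),
        net := (net s - {#(q, p, B)#}) + Out,
        sent := sent s + Out\<rparr>"
  have st: "step n t Byz s ?s'" using receive.hyps by (rule step.receive)
  note I = receive.prems[unfolded Inv_def]
  note H = receive.hyps
  have rh: "recv_handler n t p (BUNDLE m0 sn0 j0 S0) (loc s p) = (ls', outs)" using H Bd by simp
  note R = recv_props[OF rh]
  have mono: "\<And>r. le_ls (loc s r) (loc ?s' r)" using step_mono[OF st] .
  have pk: "(q,p,BUNDLE m0 sn0 j0 S0) \<in># net s" using H Bd by simp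
  have A: "\<forall>j m' sn'. j \<in> procs n - Byz \<and> j \<in> saved (loc ?s' j) (m',sn',j) \<longrightarrow> (j,sn') \<in> invoked ?s'"
  proof (intro allI impI)
    fix j m' sn' assume h: "j \<in> procs n - Byz \<and> j \<in> saved (loc ?s' j) (m',sn',j)"
    show "(j,sn') \<in> invoked ?s'"
    proof (cases "j = p \<and> saved ls' (m',sn',j) \<noteq> saved (loc s p) (m',sn',j)")
      case True
      then have "(m',sn',j) = (m0,sn0,j0)" "j0 \<in> S0" using R(4) by auto
      then have "j0 \<in> saved (loc s j0) (m0,sn0,j0)" using I pk h by blast
      then show ?thesis using I h \<open>(m',sn',j) = (m0,sn0,j0)\<close> by auto
    next
      case False
      then have "j \<in> saved (loc s j) (m',sn',j)" using h by (auto split: if_splits)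
      then show ?thesis using I h by auto
    qed
  qed
  have B: "\<forall>q r m' sn' j S. (q,r,BUNDLE m' sn' j S) \<in># net ?s' \<and> j \<in> procs n - Byz \<and> j \<in> S
        \<longrightarrow> j \<in> saved (loc ?s' j) (m',sn',j)"
  proof (intro allI impI)
    fix q' r m' sn' j S
    assume h: "(q',r,BUNDLE m' sn' j S) \<in># net ?s' \<and> j \<in> procs n - Byz \<and> j \<in> S"
    show "j \<in> saved (loc ?s' j) (m',sn',j)"
    proof (cases "(q',r,BUNDLE m' sn' j S) \<in># net s")
      case True
      then show ?thesis using I h le_saved[OF mono[of j]] by blast
    next
      case False
      then have "(q',r,BUNDLE m' sn' j S) \<in># Out" using h by (auto dest: in_diffD)
      then have "(q',r,BUNDLE m' sn' j S) \<in># sum_list (map (bcast n p) outs)" using H by simp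
      then obtain B' where B': "B' \<in> set outs" "(q',r,BUNDLE m' sn' j S) = (p, r, B')"
        using mem_suml[THEN iffD1] by blast
      then have ne: "outs \<noteq> []" by auto
      have eqs: "m' = m0" "sn' = sn0" "j = j0" using B' R(2) by auto
      show ?thesis
      proof (cases "j0 = p")
        case True
        then show ?thesis using R(3)[OF ne] eqs by simp
      next
        case False
        have "j0 \<in> saved (loc s j0) (m0,sn0,j0)" using I pk R(3)[OF ne] h eqs by blast
        then show ?thesis using False eqs by simp
      qed
    qed
  qed
  have C: "\<forall>x \<in># sent ?s'. fst x \<in> Byz \<or> fst x \<in> procs n"
    using I H by (auto simp: mem_bcast)
  have D: "\<forall>r \<in> procs n - Byz. cnt r sn i (sent ?s') \<le> n * fv r sn i (loc ?s' r)"
  proof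
    fix r assume r: "r \<in> procs n - Byz"
    have old: "cnt r sn i (sent s) \<le> n * fv r sn i (loc s r)" using I r by blast
    have fm: "fv r sn i (loc s r) \<le> fv r sn i (loc ?s' r)" using fv_mono[OF mono] .
    have m2: "n * fv r sn i (loc s r) \<le> n * fv r sn i (loc ?s' r)" by (rule mult_le_mono2[OF fm])
    show "cnt r sn i (sent ?s') \<le> n * fv r sn i (loc ?s' r)"
    proof (cases "p = r \<and> (sn0, j0) = (sn, i)")
      case True
      then have eq: "p = r" "sn0 = sn" "j0 = i" by auto
      have fl: "filter (\<lambda>B. bundle_tag B = (sn,i)) outs = outs"
        using R(2) eq by (intro filter_True) auto
      have "cnt r sn i (sent ?s') = cnt r sn i (sent s) + n * length outs"
        using H eq fl by (simp add: cnt_suml)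
      moreover have "length outs + fv p sn i (loc s p) \<le> fv p sn i ls'" using R(5) eq by simp
      then have "n * length outs + n * fv p sn i (loc s p) \<le> n * fv p sn i ls'"
        by (metis add_mult_distrib2 mult_le_mono2)
      ultimately show ?thesis using old eq by simp
    next
      case False
      have "filter (\<lambda>B. bundle_tag B = (sn,i)) outs = [] \<or> p \<noteq> r"
        using R(2) False by (cases "p = r") (auto intro!: filter_False)
      then have "cnt r sn i (sent ?s') = cnt r sn i (sent s)" using H by (auto simp: cnt_suml)
      then show ?thesis using old m2 by linarith
    qed
  qed
  show ?case using A B C D unfolding Inv_def by blast
next
  case (byz_send p q S s m sn0 j)
  note I = byz_send.prems[unfolded Inv_def]
  let ?x = "(p, q, BUNDLE m sn0 j S)"
  have c0: "cnt r sn i (sent s + {#?x#}) = cnt r sn i (sent s)" if "r \<notin> Byz" for r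
    using byz_send.hyps that by (simp only: cnt_plus cnt_single) auto
  have B: "\<forall>q r m' sn' j' S'. (q,r,BUNDLE m' sn' j' S') \<in># net s + {#?x#} \<and> j' \<in> procs n - Byz \<and> j' \<in> S'
        \<longrightarrow> j' \<in> saved (loc s j') (m',sn',j')"
  proof (intro allI impI)
    fix q' r m' sn' j' S'
    assume h: "(q',r,BUNDLE m' sn' j' S') \<in># net s + {#?x#} \<and> j' \<in> procs n - Byz \<and> j' \<in> S'"
    show "j' \<in> saved (loc s j') (m',sn',j')"
    proof (cases "(q',r,BUNDLE m' sn' j' S') \<in># net s")
      case True then show ?thesis using I h by blast
    next
      case False then show ?thesis using h byz_send.hyps by auto
    qed
  qed
  have C: "\<forall>x \<in># sent s + {#?x#}. fst x \<in> Byz \<or> fst x \<in> procs n" using I byz_send.hyps by auto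
  have D: "\<forall>r \<in> procs n - Byz. cnt r sn i (sent s + {#?x#}) \<le> n * fv r sn i (loc s r)"
    using I c0 by auto
  have A: "\<forall>j m sn'. j \<in> procs n - Byz \<and> j \<in> saved (loc s j) (m,sn',j) \<longrightarrow> (j,sn') \<in> invoked s"
    using I by blast
  let ?s' = "s\<lparr>net := net s + {#?x#}, sent := sent s + {#?x#}\<rparr>"
  have e: "loc ?s' = loc s" "net ?s' = net s + {#?x#}" "sent ?s' = sent s + {#?x#}" "invoked ?s' = invoked s"
    by simp_all
  show ?case unfolding Inv_def e using A B C D by blast
qed


lemma reach_Inv: "reachable n t Byz s \<Longrightarrow> Inv n Byz sn i s"
  unfolding reachable_def
proof (induction rule: rtranclp_induct)
  case base then show ?case by (rule Inv_init)
next
  case (step y z) then show ?case using Inv_step by blast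
qed

lemma size_split:
  assumes "finite A" "\<forall>x\<in>#M. P x \<longrightarrow> fst x \<in> A"
  shows "size (filter_mset P M) = (\<Sum>p\<in>A. size (filter_mset (\<lambda>x. P x \<and> fst x = p) M))"
  using assms(2)
proof (induction M)
  case empty then show ?case by simp
next
  case (add x M)
  then have IH: "size (filter_mset P M) = (\<Sum>p\<in>A. size (filter_mset (\<lambda>x. P x \<and> fst x = p) M))" by simp
  have "(\<Sum>p\<in>A. size (filter_mset (\<lambda>y. P y \<and> fst y = p) (add_mset x M))) =
        (\<Sum>p\<in>A. size (filter_mset (\<lambda>y. P y \<and> fst y = p) M) + (if P x \<and> fst x = p then 1 else 0))"
    by (rule sum.cong) auto
  also have "\<dots> = (\<Sum>p\<in>A. size (filter_mset (\<lambda>y. P y \<and> fst y = p) M)) + (\<Sum>p\<in>A. (if P x \<and> fst x = p then 1 else 0))"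
    by (rule sum.distrib)
  also have "(\<Sum>p\<in>A. (if P x \<and> fst x = p then 1 else 0)) = (if P x then 1 else (0::nat))"
    using add.prems assms(1) by (cases "P x") (auto simp: sum.delta)
  finally show ?case using IH by simp
qed

theorem mainTheorem11:
  fixes n t d :: nat and Byz :: "nat set" and s :: "'m gstate" and i sn :: nat
  assumes "n > 3 * t + 2 * d"
    and "Byz \<subseteq> procs n" and "card Byz \<le> t"
    and "d < n - card Byz"
    and "i \<in> procs n - Byz"
    and "reachable n t Byz s"
  shows "size (filter_mset (\<lambda>(src, dst, B). src \<notin> Byz \<and> bundle_tag B = (sn, i)) (sent s))
           \<le> 2 * n ^ 2"
proof -
  have I: "Inv n Byz sn i s" using reach_Inv[OF assms(6)] .
  let ?P = "\<lambda>(src, dst, B). src \<notin> Byz \<and> bundle_tag B = (sn, i)"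
  let ?A = "procs n - Byz"
  have fa: "finite ?A" by simp
  have cov: "\<forall>x\<in>#sent s. ?P x \<longrightarrow> fst x \<in> ?A" using I unfolding Inv_def by auto
  have "size (filter_mset ?P (sent s)) = (\<Sum>p\<in>?A. size (filter_mset (\<lambda>x. ?P x \<and> fst x = p) (sent s)))"
    by (rule size_split[OF fa cov])
  also have "\<dots> = (\<Sum>p\<in>?A. cnt p sn i (sent s))"
  proof (rule sum.cong)
    fix p assume "p \<in> ?A"
    then have "\<forall>x\<in>#sent s. (?P x \<and> fst x = p) = (\<lambda>(src, dst, B). src = p \<and> bundle_tag B = (sn, i)) x"
      by auto
    then show "size (filter_mset (\<lambda>x. ?P x \<and> fst x = p) (sent s)) = cnt p sn i (sent s)"
      unfolding cnt_def by (intro arg_cong[where f=size] filter_mset_cong) auto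
  qed simp
  also have "\<dots> \<le> (\<Sum>p\<in>?A. 2 * n)"
  proof (rule sum_mono)
    fix p assume p: "p \<in> ?A"
    have "cnt p sn i (sent s) \<le> n * fv p sn i (loc s p)" using I p unfolding Inv_def by blast
    moreover have "fv p sn i (loc s p) \<le> 2" unfolding fv_def by auto
    ultimately show "cnt p sn i (sent s) \<le> 2 * n"
      by (metis dual_order.trans mult.commute mult_le_mono2)
  qed
  also have "\<dots> = 2 * n * card ?A" by simp
  also have "\<dots> \<le> 2 * n * n"
    by (rule mult_le_mono2) (metis card_procs card_mono Diff_subset fin_procs)
  finally show ?thesis by (simp add: power2_eq_square)
qed

end
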